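(* If $\mathcal{A}$ and $\mathcal{B}$ are leaktight probabilistic automata over the same alphabet, then their synchronised product $\mathcal{A}\times\mathcal{B}$ is leaktight.
   Context: Fix a finite alphabet $A$. Here a probabilistic automaton (ignoring initial and final states, which play no role) is a pair $(Q,\Delta)$ with $Q$ finite and $\Delta:Q\times A\to\mathcal{D}(Q)$. For $a\in A$ let $M_a(s,t)=\Delta(s,a)(t)$, for $u=a_0\cdots a_{n-1}$ let $M_u=M_{a_0}\cdots M_{a_{n-1}}$ (identity for the empty word), and $\mathbb{P}(s\xrightarrow{u}t)=M_u(s,t)$. A nonnegative $Q\times Q$ matrix $M$ is idempotent if $M(s,t)>0\iff M^2(s,t)>0$ for all $s,t$; a word $u$ is idempotent if $M_u$ is. A leak is a sequence $(u_n)$ of idempotent words such that $M_{u_n}$ converges to an idempotent matrix $M$ and there exist states $r,q$, both recurrent in the Markov chain with transition matrix $M$, with $\lim_n\mathbb{P}(r\xrightarrow{u_n}q)=0$ and $\mathbb{P}(r\xrightarrow{u_n}q)>0$ for all $n$; the automaton is leaktight if it has no leak. For $\mathcal{A}=(Q^{\mathcal{A}},\Delta^{\mathcal{A}})$ and $\mathcal{B}=(Q^{\mathcal{B}},\Delta^{\mathcal{B}})$, the synchronised product is $\mathcal{A}\times\mathcal{B}=(Q^{\mathcal{A}}\times Q^{\mathcal{B}},\Delta)$ where $\Delta((q,p),a)$ is the product distribution $\Delta((q,p),a)(q',p')=\Delta^{\mathcal{A}}(q,a)(q')\cdot\Delta^{\mathcal{B}}(p,a)(p')$. *)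

theory Defs
  imports "HOL-Probability.Probability"
begin

definition trans_mat :: "('q \<Rightarrow> 'a \<Rightarrow> 'q pmf) \<Rightarrow> 'a \<Rightarrow> 'q \<Rightarrow> 'q \<Rightarrow> real" where
  "trans_mat \<Delta> a s t = pmf (\<Delta> s a) t"

definition mat_mult :: "('q::finite \<Rightarrow> 'q \<Rightarrow> real) \<Rightarrow> ('q \<Rightarrow> 'q \<Rightarrow> real) \<Rightarrow> 'q \<Rightarrow> 'q \<Rightarrow> real" where
  "mat_mult M N s t = (\<Sum>u\<in>UNIV. M s u * N u t)"

definition mat_id :: "'q \<Rightarrow> 'q \<Rightarrow> real" where
  "mat_id s t = (if s = t then 1 else 0)"

definition word_mat :: "('q::finite \<Rightarrow> 'a \<Rightarrow> 'q pmf) \<Rightarrow> 'a list \<Rightarrow> 'q \<Rightarrow> 'q \<Rightarrow> real" where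
  "word_mat \<Delta> w = foldr (\<lambda>a M. mat_mult (trans_mat \<Delta> a) M) w mat_id"

definition idempotent_mat :: "('q::finite \<Rightarrow> 'q \<Rightarrow> real) \<Rightarrow> bool" where
  "idempotent_mat M \<longleftrightarrow> (\<forall>s t. M s t > 0 \<longleftrightarrow> mat_mult M M s t > 0)"

text \<open>Recurrence of a state in the finite Markov chain with transition matrix M:
  every state reachable from s (in the support graph of M) can reach s back.\<close>
definition recurrent :: "('q \<Rightarrow> 'q \<Rightarrow> real) \<Rightarrow> 'q \<Rightarrow> bool" where
  "recurrent M s \<longleftrightarrow>
     (\<forall>t. (s, t) \<in> {(x, y). M x y > 0}\<^sup>* \<longrightarrow> (t, s) \<in> {(x, y). M x y > 0}\<^sup>*)"

definition is_leak :: "('q::finite \<Rightarrow> 'a \<Rightarrow> 'q pmf) \<Rightarrow> (nat \<Rightarrow> 'a list) \<Rightarrow> bool" where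
  "is_leak \<Delta> u \<longleftrightarrow>
     (\<forall>n. idempotent_mat (word_mat \<Delta> (u n))) \<and>
     (\<exists>M r q. (\<forall>s t. (\<lambda>n. word_mat \<Delta> (u n) s t) \<longlonglongrightarrow> M s t) \<and>
              idempotent_mat M \<and> recurrent M r \<and> recurrent M q \<and>
              (\<lambda>n. word_mat \<Delta> (u n) r q) \<longlonglongrightarrow> 0 \<and>
              (\<forall>n. word_mat \<Delta> (u n) r q > 0))"

definition leaktight :: "('q::finite \<Rightarrow> 'a \<Rightarrow> 'q pmf) \<Rightarrow> bool" where
  "leaktight \<Delta> \<longleftrightarrow> \<not> (\<exists>u. is_leak \<Delta> u)"

definition sync_product ::
  "('q \<Rightarrow> 'a \<Rightarrow> 'q pmf) \<Rightarrow> ('p \<Rightarrow> 'a \<Rightarrow> 'p pmf) \<Rightarrow> ('q \<times> 'p) \<Rightarrow> 'a \<Rightarrow> ('q \<times> 'p) pmf" where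
  "sync_product \<Delta>A \<Delta>B = (\<lambda>(q, p) a. pair_pmf (\<Delta>A q a) (\<Delta>B p a))"

end

theory Submission
  imports Defs
begin

definition kron :: "('q \<Rightarrow> 'q \<Rightarrow> real) \<Rightarrow> ('p \<Rightarrow> 'p \<Rightarrow> real) \<Rightarrow> ('q \<times> 'p) \<Rightarrow> ('q \<times> 'p) \<Rightarrow> real" where
  "kron A B = (\<lambda>(s, s') (t, t'). A s t * B s' t')"

definition stoch :: "('q::finite \<Rightarrow> 'q \<Rightarrow> real) \<Rightarrow> bool" where
  "stoch M \<longleftrightarrow> (\<forall>s t. 0 \<le> M s t) \<and> (\<forall>s. (\<Sum>t\<in>UNIV. M s t) = 1)"

lemma kron_mult:
  fixes A C :: "'q::finite \<Rightarrow> 'q \<Rightarrow> real" and B D :: "'p::finite \<Rightarrow> 'p \<Rightarrow> real"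
  shows "mat_mult (kron A B) (kron C D) = kron (mat_mult A C) (mat_mult B D)"
proof (intro ext, clarify)
  fix s s' t t'
  have "mat_mult (kron A B) (kron C D) (s, s') (t, t')
      = (\<Sum>(u, v)\<in>UNIV \<times> UNIV. (A s u * C u t) * (B s' v * D v t'))"
    unfolding mat_mult_def kron_def UNIV_Times_UNIV
    by (intro sum.cong) (auto simp: algebra_simps)
  also have "\<dots> = (\<Sum>u\<in>UNIV. A s u * C u t) * (\<Sum>v\<in>UNIV. B s' v * D v t')"
    by (simp add: sum_product sum.cartesian_product)
  finally show "mat_mult (kron A B) (kron C D) (s, s') (t, t') = kron (mat_mult A C) (mat_mult B D) (s, s') (t, t')"
    by (simp add: kron_def mat_mult_def)
qed

lemma word_mat_Cons: "word_mat \<Delta> (a # w) = mat_mult (trans_mat \<Delta> a) (word_mat \<Delta> w)"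
  by (simp add: word_mat_def)

lemma word_mat_Nil: "word_mat \<Delta> [] = mat_id"
  by (simp add: word_mat_def)

lemma word_mat_sync:
  fixes \<Delta>A :: "'q::finite \<Rightarrow> 'a \<Rightarrow> 'q pmf" and \<Delta>B :: "'p::finite \<Rightarrow> 'a \<Rightarrow> 'p pmf"
  shows "word_mat (sync_product \<Delta>A \<Delta>B) w = kron (word_mat \<Delta>A w) (word_mat \<Delta>B w)"
proof (induction w)
  case Nil
  then show ?case by (auto simp: word_mat_Nil kron_def mat_id_def fun_eq_iff)
next
  case (Cons a w)
  have "trans_mat (sync_product \<Delta>A \<Delta>B) a = kron (trans_mat \<Delta>A a) (trans_mat \<Delta>B a)"
    by (auto simp: fun_eq_iff trans_mat_def kron_def sync_product_def pmf_pair)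
  then show ?case using Cons by (simp add: word_mat_Cons kron_mult)
qed

lemma stoch_mult: assumes "stoch M" "stoch N" shows "stoch (mat_mult M N)"
proof -
  have "\<And>s t. 0 \<le> mat_mult M N s t" using assms unfolding stoch_def mat_mult_def
    by (intro sum_nonneg) auto
  moreover have "(\<Sum>t\<in>UNIV. mat_mult M N s t) = 1" for s
  proof -
    have "(\<Sum>t\<in>UNIV. mat_mult M N s t) = (\<Sum>u\<in>UNIV. M s u * (\<Sum>t\<in>UNIV. N u t))"
      unfolding mat_mult_def by (subst sum.swap) (simp add: sum_distrib_left)
    also have "\<dots> = 1" using assms by (simp add: stoch_def)
    finally show ?thesis .
  qed
  ultimately show ?thesis by (simp add: stoch_def)
qed

lemma stoch_word: "stoch (word_mat \<Delta> w)"
proof (induction w)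
  case Nil
  have "(\<Sum>t\<in>UNIV. mat_id s t) = 1" for s :: 'a
    by (simp add: mat_id_def)
  then show ?case by (simp add: word_mat_Nil stoch_def mat_id_def)
next
  case (Cons a w)
  have "stoch (trans_mat \<Delta> a)"
    by (simp add: stoch_def trans_mat_def sum_pmf_eq_1)
  then show ?case using Cons by (simp add: word_mat_Cons stoch_mult)
qed

lemma stoch_lim:
  assumes "\<And>n. stoch (f n)" "\<And>s t. (\<lambda>n. f n s t) \<longlonglongrightarrow> L s t"
  shows "stoch L"
proof -
  have "0 \<le> L s t" for s t
    by (rule LIMSEQ_le_const[OF assms(2)]) (use assms(1) in \<open>auto simp: stoch_def\<close>)
  moreover have "(\<Sum>t\<in>UNIV. L s t) = 1" for s
  proof -
    have "(\<lambda>n. \<Sum>t\<in>UNIV. f n s t) \<longlonglongrightarrow> (\<Sum>t\<in>UNIV. L s t)"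
      by (intro tendsto_sum assms(2))
    moreover have "(\<lambda>n. \<Sum>t\<in>UNIV. f n s t) = (\<lambda>n. 1)" using assms(1) by (simp add: stoch_def)
    ultimately show ?thesis using LIMSEQ_unique tendsto_const by metis
  qed
  ultimately show ?thesis by (simp add: stoch_def)
qed

lemma stoch_pos: assumes "stoch M" obtains t where "M s t > 0"
proof -
  have "\<exists>t. M s t > 0"
  proof (rule ccontr)
    assume "\<not> ?thesis"
    then have le: "M s t \<le> 0" for t by (simp add: not_less)
    have "M s t = 0" for t using le[of t] assms unfolding stoch_def by (meson order_antisym)
    then have "(\<Sum>t\<in>UNIV. M s t) = 0" by simp
    moreover have "(\<Sum>t\<in>UNIV. M s t) = 1" using assms unfolding stoch_def by blast
    ultimately show False by simp
  qed
  then show ?thesis using that by blast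
qed

lemma mult_pos_iff_nonneg: "0 \<le> (x::real) \<Longrightarrow> 0 \<le> y \<Longrightarrow> (x * y > 0) \<longleftrightarrow> (x > 0 \<and> y > 0)"
  by (metis less_eq_real_def mult_eq_0_iff mult_pos_pos)

lemma kron_idem_left:
  assumes "stoch A" "stoch B" "idempotent_mat (kron A B)"
  shows "idempotent_mat A"
  unfolding idempotent_mat_def
proof (intro allI)
  fix s t
  fix s' :: 'b
  have AA: "stoch (mat_mult A A)" and BB: "stoch (mat_mult B B)" using assms stoch_mult by auto
  have key: "kron A B (s, s') (t, t') > 0 \<longleftrightarrow> kron (mat_mult A A) (mat_mult B B) (s, s') (t, t') > 0" for t'
    using assms(3) by (simp add: idempotent_mat_def kron_mult)
  obtain t1 where t1: "B s' t1 > 0" using stoch_pos[OF assms(2)] by blast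
  obtain t2 where t2: "mat_mult B B s' t2 > 0" using stoch_pos[OF BB] by blast
  show "A s t > 0 \<longleftrightarrow> mat_mult A A s t > 0"
  proof
    assume "A s t > 0"
    then have "kron A B (s, s') (t, t1) > 0" using t1 by (simp add: kron_def)
    then have "kron (mat_mult A A) (mat_mult B B) (s, s') (t, t1) > 0" using key by blast
    then show "mat_mult A A s t > 0" using AA BB
      by (simp add: kron_def stoch_def mult_pos_iff_nonneg)
  next
    assume "mat_mult A A s t > 0"
    then have "kron (mat_mult A A) (mat_mult B B) (s, s') (t, t2) > 0" using t2 by (simp add: kron_def)
    then have "kron A B (s, s') (t, t2) > 0" using key by blast
    then show "A s t > 0" using assms
      by (simp add: kron_def stoch_def mult_pos_iff_nonneg)
  qed
qed

lemma kron_idem_right: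
  assumes "stoch A" "stoch B" "idempotent_mat (kron A B)"
  shows "idempotent_mat B"
  unfolding idempotent_mat_def
proof (intro allI)
  fix s' t'
  fix s :: 'a
  have AA: "stoch (mat_mult A A)" and BB: "stoch (mat_mult B B)" using assms stoch_mult by auto
  have key: "kron A B (s, s') (t, t') > 0 \<longleftrightarrow> kron (mat_mult A A) (mat_mult B B) (s, s') (t, t') > 0" for t
    using assms(3) by (simp add: idempotent_mat_def kron_mult)
  obtain t1 where t1: "A s t1 > 0" using stoch_pos[OF assms(1)] by blast
  obtain t2 where t2: "mat_mult A A s t2 > 0" using stoch_pos[OF AA] by blast
  show "B s' t' > 0 \<longleftrightarrow> mat_mult B B s' t' > 0"
  proof
    assume "B s' t' > 0"
    then have "kron A B (s, s') (t1, t') > 0" using t1 by (simp add: kron_def)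
    then have "kron (mat_mult A A) (mat_mult B B) (s, s') (t1, t') > 0" using key by blast
    then show "mat_mult B B s' t' > 0" using AA BB
      by (simp add: kron_def stoch_def mult_pos_iff_nonneg)
  next
    assume "mat_mult B B s' t' > 0"
    then have "kron (mat_mult A A) (mat_mult B B) (s, s') (t2, t') > 0" using t2 by (simp add: kron_def)
    then have "kron A B (s, s') (t2, t') > 0" using key by blast
    then show "B s' t' > 0" using assms
      by (simp add: kron_def stoch_def mult_pos_iff_nonneg)
  qed
qed


lemma stoch_le1: assumes "stoch M" shows "M s t \<le> 1"
proof -
  have nn: "0 \<le> M s x" for x using assms by (simp add: stoch_def)
  have "M s t \<le> (\<Sum>t'\<in>UNIV. M s t')"
    by (rule member_le_sum) (simp_all add: nn)
  then show ?thesis using assms by (simp add: stoch_def)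
qed

lemma subseq_conv:
  fixes f :: "nat \<Rightarrow> 'q::finite \<Rightarrow> 'q \<Rightarrow> real"
  assumes "\<And>n s t. 0 \<le> f n s t \<and> f n s t \<le> 1"
  obtains \<phi> L where "strict_mono \<phi>" "\<And>s t. (\<lambda>n. f (\<phi> n) s t) \<longlonglongrightarrow> L s t"
proof -
  define v where "v n = ((\<chi> i. f n (fst i) (snd i)) :: real^('q\<times>'q))" for n
  have "v n \<in> cbox 0 1" for n unfolding mem_box_cart v_def using assms by simp
  hence "range v \<subseteq> cbox 0 1" by blast
  hence "bounded (range v)" using bounded_cbox bounded_subset by blast
  then obtain l \<phi> where l: "strict_mono \<phi>" "(v \<circ> \<phi>) \<longlonglongrightarrow> l"
    using bounded_imp_convergent_subsequence by blast
  have c: "(\<lambda>n. f (\<phi> n) s t) \<longlonglongrightarrow> l $ (s, t)" for s t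
    using tendsto_vec_nth[OF l(2), of "(s, t)"] by (simp add: v_def o_def)
  show ?thesis by (rule that[OF l(1)]) (rule c)
qed

lemma rec_left:
  assumes "stoch A" "stoch B" "recurrent (kron A B) (r1, r2)" shows "recurrent A r1"
  unfolding recurrent_def
proof (intro allI impI)
  fix t
  assume "(r1, t) \<in> {(x, y). A x y > 0}\<^sup>*"
  then have "\<exists>b. ((r1, r2), (t, b)) \<in> {(x, y). kron A B x y > 0}\<^sup>*"
  proof (induction rule: rtrancl_induct)
    case base show ?case by (rule exI, rule rtrancl_refl)
  next
    case (step y z)
    then obtain b where b: "((r1, r2), (y, b)) \<in> {(x, y). kron A B x y > 0}\<^sup>*" by blast
    obtain b' where "B b b' > 0" using stoch_pos[OF assms(2)] by blast
    then have "((y, b), (z, b')) \<in> {(x, y). kron A B x y > 0}" using step(2)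
      by (simp add: kron_def)
    then show ?case using rtrancl_into_rtrancl[OF b] by blast
  qed
  then obtain b where b: "((r1, r2), (t, b)) \<in> {(x, y). kron A B x y > 0}\<^sup>*" by blast
  have bk: "((t, b), (r1, r2)) \<in> {(x, y). kron A B x y > 0}\<^sup>*"
    using assms(3)[unfolded recurrent_def, rule_format, OF b] .
  have proj: "(fst x, fst y) \<in> {(x, y). A x y > 0}\<^sup>*"
    if "(x, y) \<in> {(x, y). kron A B x y > 0}\<^sup>*" for x y
    using that
  proof (induction rule: rtrancl_induct)
    case base then show ?case by simp
  next
    case (step y z)
    then have "kron A B y z > 0" by simp
    moreover obtain y1 y2 z1 z2 where yz: "y = (y1, y2)" "z = (z1, z2)" by (cases y, cases z)
    ultimately have "A y1 z1 * B y2 z2 > 0" by (simp add: kron_def)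
    moreover have "0 \<le> A y1 z1" "0 \<le> B y2 z2" using assms(1,2) by (simp_all add: stoch_def)
    ultimately have "A (fst y) (fst z) > 0" using yz mult_pos_iff_nonneg by simp
    then have "(fst y, fst z) \<in> {(x, y). A x y > 0}" by simp
    with step.IH show ?case by (rule rtrancl_into_rtrancl)
  qed
  show "(t, r1) \<in> {(x, y). A x y > 0}\<^sup>*" using proj[OF bk] by simp
qed

lemma rec_right:
  assumes "stoch A" "stoch B" "recurrent (kron A B) (r1, r2)" shows "recurrent B r2"
  unfolding recurrent_def
proof (intro allI impI)
  fix t
  assume "(r2, t) \<in> {(x, y). B x y > 0}\<^sup>*"
  then have "\<exists>b. ((r1, r2), (b, t)) \<in> {(x, y). kron A B x y > 0}\<^sup>*"
  proof (induction rule: rtrancl_induct)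
    case base show ?case by (rule exI, rule rtrancl_refl)
  next
    case (step y z)
    then obtain b where b: "((r1, r2), (b, y)) \<in> {(x, y). kron A B x y > 0}\<^sup>*" by blast
    obtain b' where "A b b' > 0" using stoch_pos[OF assms(1)] by blast
    then have "((b, y), (b', z)) \<in> {(x, y). kron A B x y > 0}" using step(2)
      by (simp add: kron_def)
    then show ?case using rtrancl_into_rtrancl[OF b] by blast
  qed
  then obtain b where b: "((r1, r2), (b, t)) \<in> {(x, y). kron A B x y > 0}\<^sup>*" by blast
  have bk: "((b, t), (r1, r2)) \<in> {(x, y). kron A B x y > 0}\<^sup>*"
    using assms(3)[unfolded recurrent_def, rule_format, OF b] .
  have proj: "(snd x, snd y) \<in> {(x, y). B x y > 0}\<^sup>*"
    if "(x, y) \<in> {(x, y). kron A B x y > 0}\<^sup>*" for x y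
    using that
  proof (induction rule: rtrancl_induct)
    case base then show ?case by simp
  next
    case (step y z)
    then have "kron A B y z > 0" by simp
    moreover obtain y1 y2 z1 z2 where yz: "y = (y1, y2)" "z = (z1, z2)" by (cases y, cases z)
    ultimately have "A y1 z1 * B y2 z2 > 0" by (simp add: kron_def)
    moreover have "0 \<le> A y1 z1" "0 \<le> B y2 z2" using assms(1,2) by (simp_all add: stoch_def)
    ultimately have "B (snd y) (snd z) > 0" using yz mult_pos_iff_nonneg by simp
    then have "(snd y, snd z) \<in> {(x, y). B x y > 0}" by simp
    with step.IH show ?case by (rule rtrancl_into_rtrancl)
  qed
  show "(t, r2) \<in> {(x, y). B x y > 0}\<^sup>*" using proj[OF bk] by simp
qed

theorem proposition5p2:
  fixes \<Delta>A :: "'q::finite \<Rightarrow> 'a::finite \<Rightarrow> 'q pmf"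
    and \<Delta>B :: "'p::finite \<Rightarrow> 'a \<Rightarrow> 'p pmf"
  assumes "leaktight \<Delta>A" and "leaktight \<Delta>B"
  shows "leaktight (sync_product \<Delta>A \<Delta>B)"
  unfolding leaktight_def
proof
  assume "\<exists>u. is_leak (sync_product \<Delta>A \<Delta>B) u"
  then obtain u where "is_leak (sync_product \<Delta>A \<Delta>B) u" by blast
  then obtain M r q where
    idem: "\<And>n. idempotent_mat (word_mat (sync_product \<Delta>A \<Delta>B) (u n))" and
    conv: "\<And>s t. (\<lambda>n. word_mat (sync_product \<Delta>A \<Delta>B) (u n) s t) \<longlonglongrightarrow> M s t" and
    Mi: "idempotent_mat M" and rr: "recurrent M r" and rq: "recurrent M q" and
    lim0: "(\<lambda>n. word_mat (sync_product \<Delta>A \<Delta>B) (u n) r q) \<longlonglongrightarrow> 0" and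
    pos: "\<And>n. word_mat (sync_product \<Delta>A \<Delta>B) (u n) r q > 0"
    unfolding is_leak_def by blast
  obtain r1 r2 where r: "r = (r1, r2)" by (cases r)
  obtain q1 q2 where q: "q = (q1, q2)" by (cases q)
  define fA where "fA n = word_mat \<Delta>A (u n)" for n
  define fB where "fB n = word_mat \<Delta>B (u n)" for n
  have sA: "stoch (fA n)" and sB: "stoch (fB n)" for n
    by (simp_all add: fA_def fB_def stoch_word)
  have prodeq: "word_mat (sync_product \<Delta>A \<Delta>B) (u n) = kron (fA n) (fB n)" for n
    by (simp add: fA_def fB_def word_mat_sync)
  have bA: "0 \<le> fA n s t \<and> fA n s t \<le> 1" and bB: "0 \<le> fB n s' t' \<and> fB n s' t' \<le> 1" for n s t s' t'
    using sA[of n] sB[of n] stoch_le1[OF sA[of n]] stoch_le1[OF sB[of n]] by (auto simp: stoch_def)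
  obtain \<phi>1 LA where p1: "strict_mono \<phi>1" and LA: "\<And>s t. (\<lambda>n. fA (\<phi>1 n) s t) \<longlonglongrightarrow> LA s t"
    using subseq_conv[of fA] bA by blast
  obtain \<phi>2 LB where p2: "strict_mono \<phi>2" and LB: "\<And>s t. (\<lambda>n. fB (\<phi>1 (\<phi>2 n)) s t) \<longlonglongrightarrow> LB s t"
    using subseq_conv[of "\<lambda>n. fB (\<phi>1 n)"] bB by blast
  define \<phi> where "\<phi> = \<phi>1 \<circ> \<phi>2"
  have p: "strict_mono \<phi>" using p1 p2 by (simp add: \<phi>_def strict_mono_o)
  have LA': "(\<lambda>n. fA (\<phi> n) s t) \<longlonglongrightarrow> LA s t" for s t
    using LIMSEQ_subseq_LIMSEQ[OF LA p2, of s t] by (simp add: \<phi>_def o_def)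
  have LB': "(\<lambda>n. fB (\<phi> n) s t) \<longlonglongrightarrow> LB s t" for s t
    using LB by (simp add: \<phi>_def)
  have Meq: "M = kron LA LB"
  proof (intro ext, clarify)
    fix s s' t t'
    have "(\<lambda>n. kron (fA (\<phi> n)) (fB (\<phi> n)) (s, s') (t, t')) \<longlonglongrightarrow> kron LA LB (s, s') (t, t')"
      unfolding kron_def by (simp add: tendsto_mult LA' LB')
    moreover have "(\<lambda>n. kron (fA (\<phi> n)) (fB (\<phi> n)) (s, s') (t, t')) \<longlonglongrightarrow> M (s, s') (t, t')"
      using LIMSEQ_subseq_LIMSEQ[OF conv p, of "(s, s')" "(t, t')"] by (simp add: o_def prodeq)
    ultimately show "M (s, s') (t, t') = kron LA LB (s, s') (t, t')" using LIMSEQ_unique by blast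
  qed
  have sLA: "stoch LA" using stoch_lim[OF sA LA'] .
  have sLB: "stoch LB" using stoch_lim[OF sB LB'] .
  have iLA: "idempotent_mat LA" using kron_idem_left[OF sLA sLB] Mi Meq by simp
  have iLB: "idempotent_mat LB" using kron_idem_right[OF sLA sLB] Mi Meq by simp
  have ifA: "idempotent_mat (fA n)" and ifB: "idempotent_mat (fB n)" for n
  proof -
    have "idempotent_mat (kron (fA n) (fB n))" using idem[of n] by (simp add: prodeq)
    then show "idempotent_mat (fA n)" "idempotent_mat (fB n)"
      using kron_idem_left[OF sA sB] kron_idem_right[OF sA sB] by blast+
  qed
  have rA: "recurrent LA r1" "recurrent LA q1"
    using rec_left[OF sLA sLB] rr rq Meq r q by auto
  have rB: "recurrent LB r2" "recurrent LB q2"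
    using rec_right[OF sLA sLB] rr rq Meq r q by auto
  have posA: "fA n r1 q1 > 0" and posB: "fB n r2 q2 > 0" for n
    using pos[of n] sA[of n] sB[of n] unfolding prodeq r q
    by (simp_all add: kron_def stoch_def mult_pos_iff_nonneg)
  have "M r q = 0"
    using LIMSEQ_unique[OF conv lim0] .
  then have "LA r1 q1 = 0 \<or> LB r2 q2 = 0" using Meq r q by (simp add: kron_def)
  then show False
  proof
    assume z: "LA r1 q1 = 0"
    have "is_leak \<Delta>A (u \<circ> \<phi>)"
      unfolding is_leak_def
      apply (rule conjI)
      using ifA apply (simp add: fA_def)
      apply (rule exI[of _ LA], rule exI[of _ r1], rule exI[of _ q1])
      using LA'[of r1 q1] LA' iLA rA posA z unfolding fA_def by auto
    then show False using assms(1) unfolding leaktight_def by blast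
  next
    assume z: "LB r2 q2 = 0"
    have "is_leak \<Delta>B (u \<circ> \<phi>)"
      unfolding is_leak_def
      apply (rule conjI)
      using ifB apply (simp add: fB_def)
      apply (rule exI[of _ LB], rule exI[of _ r2], rule exI[of _ q2])
      using LB'[of r2 q2] LB' iLB rB posB z unfolding fB_def by auto
    then show False using assms(2) unfolding leaktight_def by blast
  qed
qed

end
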